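(* A set $\Gamma\subset\mathbb{C}$ is of the form $f(\mathbb{R})$ for some nonconstant delta-monotone map $f\colon\mathbb{C}\to\mathbb{C}$ if and only if $\Gamma$ is a Lipschitz graph, i.e. $\Gamma=\{x+ig(x)\colon x\in\mathbb{R}\}$ for some Lipschitz function $g\colon\mathbb{R}\to\mathbb{R}$ (equivalently, the projection $w\mapsto\operatorname{Re}w$ is a bi-Lipschitz map of $\Gamma$ onto $\mathbb{R}$).
   Context: A map $f\colon\mathbb{C}\to\mathbb{C}$ is delta-monotone if there exists $\delta>0$ such that $\operatorname{Re}\frac{f(z)-f(\zeta)}{z-\zeta}\ge\delta\frac{|f(z)-f(\zeta)|}{|z-\zeta|}$ for all distinct $z,\zeta\in\mathbb{C}$. *)

theory Defs
  imports "HOL-Analysis.Analysis"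
begin

definition delta_monotone :: "(complex \<Rightarrow> complex) \<Rightarrow> bool" where
  "delta_monotone f \<longleftrightarrow> (\<exists>\<delta>>0. \<forall>z \<zeta>. z \<noteq> \<zeta> \<longrightarrow>
      Re ((f z - f \<zeta>) / (z - \<zeta>)) \<ge> \<delta> * (cmod (f z - f \<zeta>) / cmod (z - \<zeta>)))"

end

theory Submission
  imports Defs
begin



definition kone :: "real \<Rightarrow> complex \<Rightarrow> complex \<Rightarrow> bool" where
  "kone \<delta> w d \<longleftrightarrow> \<delta> * cmod w * cmod d \<le> Re (w * cnj d)"

lemma Re_div_eq: "d \<noteq> 0 \<Longrightarrow> Re (w / d) = Re (w * cnj d) / (cmod d)^2"
  by (subst complex_div_cnj) (simp add: Re_divide_of_real power2_eq_square del: of_real_power)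

lemma dm_cone:
  assumes "delta_monotone f"
  obtains \<delta> where "\<delta> > 0" "\<And>p q. kone \<delta> (f p - f q) (p - q)"
proof -
  obtain \<delta> where d: "\<delta> > 0" and H: "\<And>z \<zeta>. z \<noteq> \<zeta> \<Longrightarrow>
      Re ((f z - f \<zeta>) / (z - \<zeta>)) \<ge> \<delta> * (cmod (f z - f \<zeta>) / cmod (z - \<zeta>))"
    using assms unfolding delta_monotone_def by blast
  have "kone \<delta> (f p - f q) (p - q)" for p q
  proof (cases "p = q")
    case True then show ?thesis by (simp add: kone_def)
  next
    case False
    then have pos: "cmod (p - q) > 0" by simp
    have "\<delta> * (cmod (f p - f q) / cmod (p - q)) \<le> Re ((f p - f q) * cnj (p - q)) / (cmod (p - q))^2"
      using H[OF False] Re_div_eq[of "p - q" "f p - f q"] False by simp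
    then have "\<delta> * (cmod (f p - f q) / cmod (p - q)) * (cmod (p - q))^2 \<le> Re ((f p - f q) * cnj (p - q))"
      using pos by (simp add: field_simps)
    then show ?thesis using pos unfolding kone_def by (simp add: power2_eq_square field_simps)
  qed
  then show ?thesis using d that by blast
qed

lemma cone_zero [simp]: "kone \<delta> 0 d" "kone \<delta> w 0"
  by (auto simp: kone_def)

lemma cone_neg: "kone \<delta> (-w) (-d) \<longleftrightarrow> kone \<delta> w d"
  by (simp add: kone_def)

lemma cone_scale:
  assumes "c > 0" shows "kone \<delta> w (of_real c * d) \<longleftrightarrow> kone \<delta> w d"
proof -
  have "Re (w * cnj (of_real c * d)) = c * Re (w * cnj d)" by (simp add: algebra_simps)
  moreover have "cmod (of_real c * d) = c * cmod d" using assms by (simp add: norm_mult)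
  ultimately show ?thesis using assms unfolding kone_def
    by (metis (no_types, opaque_lifting) mult.left_commute mult_le_cancel_left_pos)
qed

lemma cone_div:
  assumes "c > 0" shows "kone \<delta> w (d / of_real c) \<longleftrightarrow> kone \<delta> w d"
  using cone_scale[of "inverse c" \<delta> w d] assms by (simp add: divide_inverse mult.commute)

lemma cone_nonneg: "\<delta> \<ge> 0 \<Longrightarrow> kone \<delta> w d \<Longrightarrow> Re (w * cnj d) \<ge> 0"
  unfolding kone_def by (meson mult_nonneg_nonneg norm_ge_zero order_trans)

lemma cone_K:
  assumes "kone \<delta> w d1" "kone \<delta> w d2" "cmod d1 = 1" "cmod d2 = 1" "cmod (d1 + d2) < 2 * \<delta>"
  shows "w = 0"
proof -
  have "2 * \<delta> * cmod w \<le> Re (w * cnj (d1 + d2))"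
    using assms(1-4) unfolding kone_def by (simp add: algebra_simps)
  also have "\<dots> \<le> cmod (w * cnj (d1 + d2))" by (rule complex_Re_le_cmod)
  also have "\<dots> = cmod w * cmod (d1 + d2)" by (simp add: norm_mult del: complex_cnj_add)
  finally have "cmod w * (2 * \<delta> - cmod (d1 + d2)) \<le> 0" by (simp add: algebra_simps)
  moreover have "2 * \<delta> - cmod (d1 + d2) > 0" using assms(5) by simp
  ultimately have "cmod w \<le> 0" by (simp add: mult_le_0_iff)
  then show ?thesis by simp
qed

lemma cone_bound:
  assumes "kone \<delta> a d1" "kone \<delta> b d2" "cmod d1 = 1" "cmod d2 = 1" "cmod (d1 + d2) < 2 * \<delta>" "\<delta> > 0"
  shows "cmod a \<le> (1 + \<delta>) * cmod (a - b) / (2 * \<delta> - cmod (d1 + d2))"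
proof -
  have A: "\<delta> * cmod a \<le> Re (a * cnj d1)" using assms(1,3) by (simp add: kone_def)
  have B: "\<delta> * cmod b \<le> Re (b * cnj d2)" using assms(2,4) by (simp add: kone_def)
  have "Re (a * cnj d2) = Re (b * cnj d2) + Re ((a - b) * cnj d2)" by (simp add: algebra_simps)
  moreover have "Re ((a - b) * cnj d2) \<ge> - cmod (a - b)"
    using abs_Re_le_cmod[of "(a - b) * cnj d2"] assms(4) by (simp add: norm_mult)
  moreover have "cmod b \<ge> cmod a - cmod (a - b)" using norm_triangle_ineq[of b "a - b"] by simp
  moreover have "\<delta> * cmod b \<ge> \<delta> * (cmod a - cmod (a - b))"
    using \<open>cmod b \<ge> cmod a - cmod (a - b)\<close> assms(6) by (intro mult_left_mono) auto
  ultimately have C: "Re (a * cnj d2) \<ge> \<delta> * cmod a - (1 + \<delta>) * cmod (a - b)"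
    using B by (simp add: algebra_simps)
  have "Re (a * cnj (d1 + d2)) \<le> cmod a * cmod (d1 + d2)"
    using complex_Re_le_cmod[of "a * cnj (d1 + d2)"] by (simp add: norm_mult del: complex_cnj_add)
  then have "2 * \<delta> * cmod a - (1 + \<delta>) * cmod (a - b) \<le> cmod a * cmod (d1 + d2)"
    using A C by (simp add: algebra_simps)
  then have "cmod a * (2 * \<delta> - cmod (d1 + d2)) \<le> (1 + \<delta>) * cmod (a - b)" by (simp add: algebra_simps)
  then show ?thesis using assms(5) by (simp add: field_simps)
qed

lemma cone_lim:
  assumes "a \<longlonglongrightarrow> A" "d \<longlonglongrightarrow> D" "\<And>n. kone \<delta> (a n) (d n)"
  shows "kone \<delta> A D"
proof -
  have "(\<lambda>n. \<delta> * cmod (a n) * cmod (d n)) \<longlonglongrightarrow> \<delta> * cmod A * cmod D"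
    by (intro tendsto_intros assms)
  moreover have "(\<lambda>n. Re (a n * cnj (d n))) \<longlonglongrightarrow> Re (A * cnj D)"
    by (intro tendsto_intros assms)
  ultimately show ?thesis unfolding kone_def
    using assms(3) unfolding kone_def by (intro tendsto_le[OF trivial_limit_sequentially]) auto
qed

lemma cone_conv:
  fixes F :: "nat \<Rightarrow> complex"
  assumes d: "\<delta> > 0" and u: "cmod u = 1" and mono: "\<And>n m. n \<le> m \<Longrightarrow> kone \<delta> (F m - F n) u"
    and bd: "\<And>n. Re (F n * cnj u) \<le> B"
  shows "convergent F"
proof -
  define h where "h n = Re (F n * cnj u)" for n
  have inc: "incseq h"
  proof (rule incseq_SucI)
    fix n
    have "Re ((F (Suc n) - F n) * cnj u) \<ge> 0" using cone_nonneg[OF _ mono[of n "Suc n"]] d by simp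
    then show "h n \<le> h (Suc n)" by (simp add: h_def algebra_simps)
  qed
  have "bdd_above (range h)" unfolding h_def by (rule bdd_aboveI2[of _ _ B]) (rule bd)
  then have "convergent h" using LIMSEQ_incseq_SUP[OF _ inc] by (auto simp: convergent_def)
  then have Ch: "Cauchy h" by (rule convergent_Cauchy)
  have key: "cmod (F m - F n) \<le> (h m - h n) / \<delta>" if "n \<le> m" for n m
  proof -
    have "\<delta> * cmod (F m - F n) \<le> Re ((F m - F n) * cnj u)" using mono[OF that] u by (simp add: kone_def)
    then show ?thesis using d by (simp add: h_def field_simps)
  qed
  have "Cauchy F"
  proof (rule metric_CauchyI)
    fix e :: real assume e: "e > 0"
    then obtain M where M: "\<And>m n. m \<ge> M \<Longrightarrow> n \<ge> M \<Longrightarrow> dist (h m) (h n) < e * \<delta>"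
      using Ch d unfolding Cauchy_def by (meson mult_pos_pos)
    have "dist (F m) (F n) < e" if "m \<ge> M" "n \<ge> M" for m n
    proof (cases "n \<le> m")
      case True
      have "cmod (F m - F n) \<le> (h m - h n) / \<delta>" by (rule key[OF True])
      also have "\<dots> < e" using M[OF that] d by (simp add: dist_real_def field_simps)
      finally show ?thesis by (simp add: dist_norm)
    next
      case False
      have "cmod (F n - F m) \<le> (h n - h m) / \<delta>" using False by (intro key) simp
      also have "\<dots> < e" using M[OF that] d by (simp add: dist_real_def field_simps)
      finally show ?thesis by (simp add: dist_norm norm_minus_commute)
    qed
    then show "\<exists>M. \<forall>m\<ge>M. \<forall>n\<ge>M. dist (F m) (F n) < e" by blast
  qed
  then show ?thesis using Cauchy_convergent_iff by blast
qed



lemma chain: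
  assumes d: "\<delta> > 0" and Q1: "Q 1"
    and step: "\<And>u v. cmod u = 1 \<Longrightarrow> cmod v = 1 \<Longrightarrow> cmod (v - u) < 2 * \<delta> \<Longrightarrow> Q u \<Longrightarrow> Q v"
  shows "Q (-1)"
proof -
  have "isCont (\<lambda>t::real. exp (\<i> * of_real t)) 0" by (intro continuous_intros)
  then have "(\<lambda>t::real. exp (\<i> * of_real t)) \<midarrow>0\<rightarrow> 1" by (simp add: isCont_def)
  moreover have d2: "2 * \<delta> > 0" using d by simp
  ultimately obtain \<eta> where eta: "\<eta> > 0" and
    E: "\<And>t::real. t \<noteq> 0 \<and> norm (t - 0) < \<eta> \<longrightarrow> norm (exp (\<i> * of_real t) - 1) < 2 * \<delta>"
    unfolding LIM_eq by blast
  obtain N :: nat where N: "pi / \<eta> < of_nat N" using reals_Archimedean2 by blast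
  have "pi / \<eta> > 0" using eta by simp
  then have Npos: "N > 0" using N by (cases N) auto
  define t where "t = pi / real N"
  have tpos: "t > 0" using Npos by (simp add: t_def)
  have tlt: "t < \<eta>" using N eta Npos by (simp add: t_def field_simps)
  define c where "c k = exp (\<i> * of_real (real k * t))" for k :: nat
  have cn: "cmod (c k) = 1" for k by (simp add: c_def)
  have cstep: "cmod (c (Suc k) - c k) < 2 * \<delta>" for k
  proof -
    have "c (Suc k) = c k * exp (\<i> * of_real t)"
      by (simp add: c_def algebra_simps flip: exp_add)
    then have "c (Suc k) - c k = c k * (exp (\<i> * of_real t) - 1)" by (simp add: algebra_simps)
    then have "cmod (c (Suc k) - c k) = cmod (exp (\<i> * of_real t) - 1)" by (simp add: norm_mult cn)
    also have "\<dots> < 2 * \<delta>" using E[of t] tpos tlt by auto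
    finally show ?thesis .
  qed
  have Qc: "Q (c k)" for k
  proof (induction k)
    case 0 then show ?case using Q1 by (simp add: c_def)
  next
    case (Suc k) then show ?case using step[OF cn cn cstep] by blast
  qed
  have "c N = -1" using Npos by (simp add: c_def t_def)
  with Qc[of N] show ?thesis by simp
qed

lemma ray_mono:
  assumes H: "\<And>p q. kone \<delta> (f p - f q) (p - q)" and "n \<le> m"
  shows "kone \<delta> (f (z + of_nat m * u) - f (z + of_nat n * u)) u"
proof (cases "n = m")
  case True then show ?thesis by simp
next
  case False
  then have pos: "real m - real n > 0" using assms(2) by simp
  have e: "(z + of_nat m * u) - (z + of_nat n * u) = of_real (real m - real n) * u"
    by (simp add: algebra_simps)
  show ?thesis using H[of "z + of_nat m * u" "z + of_nat n * u"] unfolding e cone_scale[OF pos] .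
qed

lemma lim_dir: "(\<lambda>m. (c + of_nat m * v) / of_nat (Suc m)) \<longlonglongrightarrow> (v::complex)"
proof -
  have "(\<lambda>m. (c - v) / of_nat (Suc m) + v) \<longlonglongrightarrow> 0 + v"
    by (intro tendsto_add tendsto_const LIMSEQ_Suc[OF lim_const_over_n])
  moreover have "(c - v) / of_nat (Suc m) + v = (c + of_nat m * v) / of_nat (Suc m)" for m
  proof -
    have "(of_nat (Suc m) :: complex) \<noteq> 0" by (metis Suc_neq_Zero of_nat_eq_0_iff)
    then show ?thesis by (simp add: field_simps)
  qed
  ultimately show ?thesis by simp
qed

lemma kone_lim_dir:
  assumes "a \<longlonglongrightarrow> A" "\<And>m. kone \<delta> (a m) (c + of_nat m * v)"
  shows "kone \<delta> A v"
proof -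
  have "kone \<delta> (a m) ((c + of_nat m * v) / of_real (real (Suc m)))" for m
    using assms(2)[of m] cone_div[of "real (Suc m)" \<delta> "a m"] by simp
  then have "kone \<delta> (a m) ((c + of_nat m * v) / of_nat (Suc m))" for m
    by simp
  then show ?thesis using cone_lim[OF assms(1) lim_dir] by blast
qed

lemma kone_const_lim:
  assumes "a \<longlonglongrightarrow> A" "\<And>m. kone \<delta> (a m) d"
  shows "kone \<delta> A d"
  using cone_lim[OF assms(1) tendsto_const assms(2)] .



lemma inf_step:
  assumes d: "\<delta> > 0" and H: "\<And>p q. kone \<delta> (f p - f q) (p - q)"
    and Qu: "\<forall>z. (\<lambda>n. f (z + of_nat n * u)) \<longlonglongrightarrow> P"
    and u: "cmod u = 1" and v: "cmod v = 1" and uv: "cmod (v - u) < 2 * \<delta>"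
  shows "\<forall>z. (\<lambda>n. f (z + of_nat n * v)) \<longlonglongrightarrow> P"
proof
  fix z
  define T where "T n = f (z + of_nat n * v)" for n
  have A: "kone \<delta> (P - T n) u" for n
  proof (rule kone_lim_dir)
    show "(\<lambda>m. f ((z + of_nat n * v) + of_nat m * u) - T n) \<longlonglongrightarrow> P - T n"
      using Qu by (intro tendsto_diff tendsto_const) auto
    fix m
    have e: "(z + of_nat n * v + of_nat m * u) - (z + of_nat n * v) = 0 + of_nat m * u" by simp
    show "kone \<delta> (f (z + of_nat n * v + of_nat m * u) - T n) (0 + of_nat m * u)"
      using H[of "z + of_nat n * v + of_nat m * u" "z + of_nat n * v"] unfolding e T_def .
  qed
  have Bv: "kone \<delta> (T n - f z) v" for n
    using ray_mono[OF H, of 0 n z v] by (simp add: T_def)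
  have A': "kone \<delta> (T n - P) (-u)" for n
    using A[of n] cone_neg[of \<delta> "T n - P" "-u"] by simp
  define K where "K = (1 + \<delta>) * cmod (P - f z) / (2 * \<delta> - cmod (v + - u))"
  have bnd: "cmod (T n - f z) \<le> K" for n
  proof -
    have "cmod (v + - u) < 2 * \<delta>" using uv by simp
    moreover have "cmod (-u) = 1" using u by simp
    ultimately have "cmod (T n - f z) \<le> (1 + \<delta>) * cmod ((T n - f z) - (T n - P)) / (2 * \<delta> - cmod (v + - u))"
      using cone_bound[OF Bv A' v _ _ d] by blast
    then show ?thesis by (simp add: K_def)
  qed
  have "Re (T n * cnj v) \<le> cmod (f z) + K" for n
  proof -
    have "Re (T n * cnj v) \<le> cmod (T n * cnj v)" by (rule complex_Re_le_cmod)
    also have "\<dots> = cmod (T n)" using v by (simp add: norm_mult)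
    also have "\<dots> \<le> cmod (f z) + cmod (T n - f z)" using norm_triangle_ineq[of "f z" "T n - f z"] by simp
    finally show ?thesis using bnd[of n] by simp
  qed
  moreover have "\<And>n m. n \<le> m \<Longrightarrow> kone \<delta> (T m - T n) v"
    unfolding T_def by (rule ray_mono[OF H])
  ultimately have "convergent T" by (intro cone_conv[OF d v, of T "cmod (f z) + K"])
  then obtain Hh where TH: "T \<longlonglongrightarrow> Hh" by (auto simp: convergent_def)
  have i: "kone \<delta> (Hh - P) (-u)"
  proof (rule kone_const_lim[of "\<lambda>m. T m - P"])
    show "(\<lambda>m. T m - P) \<longlonglongrightarrow> Hh - P" using TH by (intro tendsto_intros)
    fix m
    show "kone \<delta> (T m - P) (- u)"
    proof (rule kone_lim_dir[of "\<lambda>n. T m - f (z + of_nat n * u)" _ _ "of_nat m * v"])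
      show "(\<lambda>n. T m - f (z + of_nat n * u)) \<longlonglongrightarrow> T m - P" using Qu by (intro tendsto_intros) auto
      fix n
      have e: "(z + of_nat m * v) - (z + of_nat n * u) = of_nat m * v + of_nat n * (- u)" by simp
      show "kone \<delta> (T m - f (z + of_nat n * u)) (of_nat m * v + of_nat n * - u)"
        using H[of "z + of_nat m * v" "z + of_nat n * u"] unfolding e T_def .
    qed
  qed
  have ii: "kone \<delta> (Hh - P) v"
  proof (rule kone_const_lim[of "\<lambda>n. Hh - f (z + of_nat n * u)"])
    show "(\<lambda>n. Hh - f (z + of_nat n * u)) \<longlonglongrightarrow> Hh - P" using Qu by (intro tendsto_intros) auto
    fix n
    show "kone \<delta> (Hh - f (z + of_nat n * u)) v"
    proof (rule kone_lim_dir[of "\<lambda>m. T m - f (z + of_nat n * u)" _ _ "- (of_nat n * u)"])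
      show "(\<lambda>m. T m - f (z + of_nat n * u)) \<longlonglongrightarrow> Hh - f (z + of_nat n * u)" using TH by (intro tendsto_intros)
      fix m
      have e: "(z + of_nat m * v) - (z + of_nat n * u) = - (of_nat n * u) + of_nat m * v" by simp
      show "kone \<delta> (T m - f (z + of_nat n * u)) (- (of_nat n * u) + of_nat m * v)"
        using H[of "z + of_nat m * v" "z + of_nat n * u"] unfolding e T_def .
    qed
  qed
  have "Hh - P = 0"
    using cone_K[OF ii i v] u uv by simp
  then show "(\<lambda>n. f (z + of_nat n * v)) \<longlonglongrightarrow> P" using TH unfolding T_def by simp
qed

lemma inf_base:
  assumes d: "\<delta> > 0" and H: "\<And>p q. kone \<delta> (f p - f q) (p - q)"
    and S: "(\<lambda>n. f (of_nat n)) \<longlonglongrightarrow> P"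
  shows "\<forall>z. (\<lambda>n. f (z + of_nat n * 1)) \<longlonglongrightarrow> P"
proof
  fix z
  define T where "T n = f (z + of_nat n * 1)" for n
  have a: "kone \<delta> (T n - P) (-1)" for n
  proof (rule kone_lim_dir[of "\<lambda>m. T n - f (of_nat m)" _ _ "z + of_nat n"])
    show "(\<lambda>m. T n - f (of_nat m)) \<longlonglongrightarrow> T n - P" using S by (intro tendsto_intros)
    fix m
    have e: "(z + of_nat n * 1) - of_nat m = z + of_nat n + of_nat m * (-1)" by simp
    show "kone \<delta> (T n - f (of_nat m)) (z + of_nat n + of_nat m * - 1)"
      using H[of "z + of_nat n * 1" "of_nat m"] unfolding e T_def .
  qed
  have "Re (T n * cnj 1) \<le> Re P" for n
    using cone_nonneg[OF _ a[of n]] d by simp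
  moreover have "\<And>n m. n \<le> m \<Longrightarrow> kone \<delta> (T m - T n) 1"
    unfolding T_def by (rule ray_mono[OF H])
  ultimately have "convergent T" by (intro cone_conv[OF d _, of 1 T "Re P"]) auto
  then obtain Hh where TH: "T \<longlonglongrightarrow> Hh" by (auto simp: convergent_def)
  have i: "kone \<delta> (Hh - P) (-1)"
  proof -
    have "(\<lambda>n. T n - P) \<longlonglongrightarrow> Hh - P" using TH by (intro tendsto_intros)
    then show ?thesis by (rule kone_const_lim) (rule a)
  qed
  have ii: "kone \<delta> (Hh - P) 1"
  proof (rule kone_const_lim[of "\<lambda>m. Hh - f (of_nat m)"])
    show "(\<lambda>m. Hh - f (of_nat m)) \<longlonglongrightarrow> Hh - P" using S by (intro tendsto_intros)
    fix m
    show "kone \<delta> (Hh - f (of_nat m)) 1"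
    proof (rule kone_lim_dir[of "\<lambda>n. T n - f (of_nat m)" _ _ "z - of_nat m"])
      show "(\<lambda>n. T n - f (of_nat m)) \<longlonglongrightarrow> Hh - f (of_nat m)" using TH by (intro tendsto_intros)
      fix n
      have e: "(z + of_nat n * 1) - of_nat m = z - of_nat m + of_nat n * 1" by simp
      show "kone \<delta> (T n - f (of_nat m)) (z - of_nat m + of_nat n * 1)"
        using H[of "z + of_nat n * 1" "of_nat m"] unfolding e T_def .
    qed
  qed
  have "Hh - P = 0"
    using cone_K[OF ii i] d by simp
  then show "(\<lambda>n. f (z + of_nat n * 1)) \<longlonglongrightarrow> P" using TH unfolding T_def by simp
qed

lemma bounded_const:
  assumes d: "\<delta> > 0" and H: "\<And>p q. kone \<delta> (f p - f q) (p - q)"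
    and M: "\<And>n::nat. Re (f (of_nat n)) \<le> M"
  shows "\<exists>c. \<forall>z. f z = c"
proof -
  have mono1: "\<And>n m. n \<le> m \<Longrightarrow> kone \<delta> (f (0 + of_nat m * 1) - f (0 + of_nat n * 1)) 1"
    by (rule ray_mono[OF H])
  have "convergent (\<lambda>n. f (0 + of_nat n * 1))"
    by (rule cone_conv[OF d _ mono1, where B=M]) (simp_all add: M)
  then obtain P where S: "(\<lambda>n. f (of_nat n)) \<longlonglongrightarrow> P" by (auto simp: convergent_def)
  define Q where "Q u \<longleftrightarrow> (\<forall>z. (\<lambda>n. f (z + of_nat n * u)) \<longlonglongrightarrow> P)" for u
  have "Q 1" using inf_base[OF d H S] by (simp add: Q_def)
  moreover have "Q u \<Longrightarrow> Q v" if "cmod u = 1" "cmod v = 1" "cmod (v - u) < 2 * \<delta>" for u v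
    using inf_step[OF d H _ that] by (simp add: Q_def)
  ultimately have Qm: "Q (-1)" using chain[OF d, of Q] by blast
  have "f z = P" for z
  proof -
    have "kone \<delta> (P - f z) 1"
    proof (rule kone_const_lim[of "\<lambda>n. f (z + of_nat n * 1) - f z"])
      show "(\<lambda>n. f (z + of_nat n * 1) - f z) \<longlonglongrightarrow> P - f z"
        using \<open>Q 1\<close> unfolding Q_def by (intro tendsto_intros) auto
      show "kone \<delta> (f (z + of_nat n * 1) - f z) 1" for n
        using ray_mono[OF H, of 0 n z 1] by simp
    qed
    moreover have "kone \<delta> (P - f z) (-1)"
    proof (rule kone_const_lim[of "\<lambda>n. f (z + of_nat n * (-1)) - f z"])
      show "(\<lambda>n. f (z + of_nat n * (-1)) - f z) \<longlonglongrightarrow> P - f z"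
        using Qm unfolding Q_def by (intro tendsto_intros) auto
      show "kone \<delta> (f (z + of_nat n * (-1)) - f z) (-1)" for n
        using ray_mono[OF H, of 0 n z "-1"] by simp
    qed
    ultimately have "P - f z = 0" using cone_K d by fastforce
    then show ?thesis by simp
  qed
  then show ?thesis by blast
qed



lemma real_mono:
  assumes d: "\<delta> > 0" and H: "\<And>p q. kone \<delta> (f p - f q) (p - q)" and "x \<le> y"
  shows "Re (f (of_real x)) \<le> Re (f (of_real y))"
proof -
  have "kone \<delta> (f (of_real y) - f (of_real x)) (of_real (y - x))"
    using H[of "of_real y" "of_real x"] by simp
  then have "0 \<le> Re ((f (of_real y) - f (of_real x)) * cnj (of_real (y - x)))"
    using cone_nonneg d by (meson less_imp_le)
  then have "0 \<le> (y - x) * Re (f (of_real y) - f (of_real x))" by (simp add: algebra_simps)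
  then show ?thesis using assms(3)
    by (cases "x = y") (auto simp: zero_le_mult_iff)
qed

definition rr :: "nat \<Rightarrow> real" where "rr n = inverse (real (Suc n))"

lemma rr_pos: "rr n > 0" by (simp add: rr_def)
lemma rr_lim: "rr \<longlonglongrightarrow> 0" unfolding rr_def by (rule LIMSEQ_inverse_real_of_nat)
lemma rr_mono: "n < m \<Longrightarrow> rr m < rr n" by (simp add: rr_def)

lemma rad_conv:
  assumes d: "\<delta> > 0" and H: "\<And>p q. kone \<delta> (f p - f q) (p - q)" and u: "cmod u = 1"
  shows "convergent (\<lambda>n. f (p + of_real (rr n) * u))"
proof (rule cone_conv[OF d _ _, of "-u"])
  show "cmod (-u) = 1" using u by simp
  fix n m :: nat assume nm: "n \<le> m"
  show "kone \<delta> (f (p + of_real (rr m) * u) - f (p + of_real (rr n) * u)) (- u)"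
  proof (cases "n = m")
    case True then show ?thesis by simp
  next
    case False
    then have pos: "rr n - rr m > 0" using rr_mono nm by simp
    have e: "(p + of_real (rr m) * u) - (p + of_real (rr n) * u) = of_real (rr n - rr m) * (- u)"
      by (simp add: algebra_simps)
    show ?thesis using H[of "p + of_real (rr m) * u" "p + of_real (rr n) * u"]
      unfolding e cone_scale[OF pos] .
  qed
next
  fix n
  have "kone \<delta> (f (p + of_real (rr n) * u) - f p) (of_real (rr n) * u)"
    using H[of "p + of_real (rr n) * u" p] by simp
  then have "kone \<delta> (f (p + of_real (rr n) * u) - f p) u" using cone_scale[OF rr_pos] by blast
  then have "0 \<le> Re ((f (p + of_real (rr n) * u) - f p) * cnj u)" using cone_nonneg d by (meson less_imp_le)
  then show "Re (f (p + of_real (rr n) * u) * cnj (- u)) \<le> Re (f p * cnj (- u))"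
    by (simp add: algebra_simps)
qed

lemma rad_cone:
  assumes d: "\<delta> > 0" and H: "\<And>p q. kone \<delta> (f p - f q) (p - q)"
    and Gu: "(\<lambda>n. f (p + of_real (rr n) * u)) \<longlonglongrightarrow> Lu"
    and Gv: "(\<lambda>n. f (p + of_real (rr n) * v)) \<longlonglongrightarrow> Lv"
  shows "kone \<delta> (Lv - Lu) v"
proof (rule kone_const_lim[of "\<lambda>m. f (p + of_real (rr m) * v) - Lu"])
  show "(\<lambda>m. f (p + of_real (rr m) * v) - Lu) \<longlonglongrightarrow> Lv - Lu" using Gv by (intro tendsto_intros)
  fix m
  have "kone \<delta> (f (p + of_real (rr m) * v) - Lu) (of_real (rr m) * v)"
  proof (rule cone_lim[of "\<lambda>n. f (p + of_real (rr m) * v) - f (p + of_real (rr n) * u)" _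
        "\<lambda>n. of_real (rr m) * v - of_real (rr n) * u"])
    show "(\<lambda>n. f (p + of_real (rr m) * v) - f (p + of_real (rr n) * u)) \<longlonglongrightarrow> f (p + of_real (rr m) * v) - Lu"
      using Gu by (intro tendsto_intros)
    have "(\<lambda>n. of_real (rr m) * v - of_real (rr n) * u) \<longlonglongrightarrow> of_real (rr m) * v - of_real 0 * u"
      using rr_lim by (intro tendsto_intros)
    then show "(\<lambda>n. of_real (rr m) * v - of_real (rr n) * u) \<longlonglongrightarrow> of_real (rr m) * v" by simp
    fix n
    have e: "(p + of_real (rr m) * v) - (p + of_real (rr n) * u) = of_real (rr m) * v - of_real (rr n) * u"
      by simp
    show "kone \<delta> (f (p + of_real (rr m) * v) - f (p + of_real (rr n) * u)) (of_real (rr m) * v - of_real (rr n) * u)"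
      using H[of "p + of_real (rr m) * v" "p + of_real (rr n) * u"] unfolding e .
  qed
  then show "kone \<delta> (f (p + of_real (rr m) * v) - Lu) v" using cone_scale[OF rr_pos] by blast
qed

lemma rad_eq:
  assumes d: "\<delta> > 0" and H: "\<And>p q. kone \<delta> (f p - f q) (p - q)"
  shows "lim (\<lambda>n. f (p + of_real (rr n) * (-1))) = lim (\<lambda>n. f (p + of_real (rr n) * 1))"
proof -
  define G where "G u = lim (\<lambda>n. f (p + of_real (rr n) * u))" for u
  have GL: "(\<lambda>n. f (p + of_real (rr n) * u)) \<longlonglongrightarrow> G u" if "cmod u = 1" for u
    using rad_conv[OF d H that, of p] unfolding G_def by (simp add: convergent_LIMSEQ_iff)
  have "G v = G u" if "cmod u = 1" "cmod v = 1" "cmod (v - u) < 2 * \<delta>" for u v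
  proof -
    have a: "kone \<delta> (G v - G u) v" by (rule rad_cone[OF d H GL GL]) (use that in auto)
    have "kone \<delta> (G u - G v) u" by (rule rad_cone[OF d H GL GL]) (use that in auto)
    then have b: "kone \<delta> (G v - G u) (-u)" using cone_neg[of \<delta> "G v - G u" "-u"] by simp
    have "G v - G u = 0" by (rule cone_K[OF a b]) (use that in auto)
    then show ?thesis by simp
  qed
  then have "G (-1) = G 1" using chain[OF d, of "\<lambda>u. G u = G 1"] by auto
  then show ?thesis by (simp add: G_def)
qed

lemma real_cont:
  assumes d: "\<delta> > 0" and H: "\<And>p q. kone \<delta> (f p - f q) (p - q)"
  shows "isCont (\<lambda>x. Re (f (of_real x))) x0"
proof -
  define u where "u x = Re (f (of_real x))" for x
  define L where "L = lim (\<lambda>n. f (of_real x0 + of_real (rr n) * 1))"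
  have Lp: "(\<lambda>n. f (of_real x0 + of_real (rr n) * 1)) \<longlonglongrightarrow> L"
    using rad_conv[OF d H, of 1 "of_real x0"] unfolding L_def by (simp add: convergent_LIMSEQ_iff)
  have Lm: "(\<lambda>n. f (of_real x0 + of_real (rr n) * (-1))) \<longlonglongrightarrow> L"
    using rad_conv[OF d H, of "-1" "of_real x0"] rad_eq[OF d H, of "of_real x0"] unfolding L_def
    by (simp add: convergent_LIMSEQ_iff)
  have Up: "(\<lambda>n. u (x0 + rr n)) \<longlonglongrightarrow> Re L"
    using tendsto_Re[OF Lp] by (simp add: u_def)
  have Um: "(\<lambda>n. u (x0 - rr n)) \<longlonglongrightarrow> Re L"
    using tendsto_Re[OF Lm] by (simp add: u_def)
  have le1: "u (x0 - rr n) \<le> u x0" for n using real_mono[OF d H, of "x0 - rr n" x0] rr_pos[of n] by (simp add: u_def)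
  have le2: "u x0 \<le> u (x0 + rr n)" for n using real_mono[OF d H, of x0 "x0 + rr n"] rr_pos[of n] by (simp add: u_def)
  have "Re L \<le> u x0" using Um le1 by (intro LIMSEQ_le_const2) auto
  moreover have "u x0 \<le> Re L" using Up le2 by (intro LIMSEQ_le_const) auto
  ultimately have ReL: "Re L = u x0" by simp
  have "\<exists>s>0. \<forall>x. x \<noteq> x0 \<and> norm (x - x0) < s \<longrightarrow> norm (u x - u x0) < e" if e: "e > 0" for e
  proof -
    have "\<forall>\<^sub>F n in sequentially. dist (u (x0 + rr n)) (u x0) < e"
      using Up ReL e by (simp add: tendsto_iff)
    moreover have "\<forall>\<^sub>F n in sequentially. dist (u (x0 - rr n)) (u x0) < e"
      using Um ReL e by (simp add: tendsto_iff)
    ultimately have "\<forall>\<^sub>F n in sequentially. dist (u (x0 + rr n)) (u x0) < e \<and> dist (u (x0 - rr n)) (u x0) < e"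
      by (rule eventually_conj)
    then obtain n where n1: "dist (u (x0 + rr n)) (u x0) < e" and n2: "dist (u (x0 - rr n)) (u x0) < e"
      unfolding eventually_sequentially by blast
    have "norm (u x - u x0) < e" if "norm (x - x0) < rr n" for x
    proof -
      have "x0 - rr n \<le> x" "x \<le> x0 + rr n" using that by auto
      then have "u (x0 - rr n) \<le> u x" "u x \<le> u (x0 + rr n)" using real_mono[OF d H, of "x0 - rr n" x] real_mono[OF d H, of x "x0 + rr n"] by (auto simp: u_def)
      then show ?thesis using n1 n2 le1 le2 by (auto simp: dist_real_def)
    qed
    then show ?thesis using rr_pos[of n] by blast
  qed
  then show ?thesis unfolding isCont_def LIM_eq u_def by blast
qed



lemma fwd:
  assumes dm: "delta_monotone f" and nc: "\<not> (\<exists>c. \<forall>z. f z = c)"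
  shows "\<exists>g :: real \<Rightarrow> real. (\<exists>L. lipschitz_on L UNIV g) \<and>
           f ` (complex_of_real ` UNIV) = {complex_of_real x + \<i> * complex_of_real (g x) | x. True}"
proof -
  obtain \<delta> where d: "\<delta> > 0" and H: "\<And>p q. kone \<delta> (f p - f q) (p - q)"
    using dm_cone[OF dm] by blast
  define u where "u x = Re (f (of_real x))" for x
  have cont: "isCont u x" for x unfolding u_def by (rule real_cont[OF d H])
  have mono: "x \<le> y \<Longrightarrow> u x \<le> u y" for x y unfolding u_def by (rule real_mono[OF d H])
  have above: "\<exists>x. s \<le> u x" for s
  proof (rule ccontr)
    assume "\<not> (\<exists>x. s \<le> u x)"
    then have "Re (f (of_nat n)) \<le> s" for n
      using not_le[of s "u (real n)"] unfolding u_def by (metis less_imp_le of_real_of_nat_eq)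
    then show False using bounded_const[OF d H] nc by blast
  qed
  have below: "\<exists>x. u x \<le> s" for s
  proof (rule ccontr)
    assume A: "\<not> (\<exists>x. u x \<le> s)"
    define f' where "f' z = - f (- z)" for z
    have H': "kone \<delta> (f' p - f' q) (p - q)" for p q
    proof -
      have "kone \<delta> (- (f' p - f' q)) (- (p - q))"
        using H[of "-p" "-q"] by (simp add: f'_def)
      then show ?thesis by (simp only: cone_neg)
    qed
    have "Re (f' (of_nat n)) \<le> - s" for n
    proof -
      have "s < u (- real n)" using A by (simp add: not_le)
      then show ?thesis by (simp add: f'_def u_def)
    qed
    then obtain c where "\<forall>z. f' z = c" using bounded_const[OF d H'] by blast
    then have "\<forall>z. f z = - c" by (metis f'_def minus_minus)
    then show False using nc by blast
  qed
  have surj: "\<exists>x. u x = s" for s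
  proof -
    obtain x1 where x1: "u x1 \<le> s" using below by blast
    obtain x2 where x2: "s \<le> u x2" using above by blast
    show ?thesis
    proof (cases "x1 \<le> x2")
      case True
      then show ?thesis using IVT[of u x1 s x2] x1 x2 cont by blast
    next
      case False
      then have "u x2 \<le> u x1" using mono by simp
      then show ?thesis using x1 x2 by (intro exI[of _ x1]) simp
    qed
  qed
  have key: "\<delta> * cmod (f (of_real x) - f (of_real y)) \<le> \<bar>u x - u y\<bar>" for x y
  proof (cases "x = y")
    case True then show ?thesis by simp
  next
    case False
    have "kone \<delta> (f (of_real x) - f (of_real y)) (of_real (x - y))"
      using H[of "of_real x" "of_real y"] by simp
    then have "\<delta> * cmod (f (of_real x) - f (of_real y)) * \<bar>x - y\<bar> \<le> (x - y) * (u x - u y)"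
      by (simp add: kone_def u_def algebra_simps del: of_real_diff)
    also have "\<dots> \<le> \<bar>x - y\<bar> * \<bar>u x - u y\<bar>" by (metis abs_ge_self abs_mult)
    finally show ?thesis using False by (simp add: mult.commute)
  qed
  define g where "g s = Im (f (of_real (SOME x. u x = s)))" for s
  have gx: "g (u x) = Im (f (of_real x))" for x
  proof -
    define y where "y = (SOME x'. u x' = u x)"
    have uy: "u y = u x" unfolding y_def by (rule someI[of _ x]) simp
    have "\<delta> * cmod (f (of_real y) - f (of_real x)) \<le> 0" using key[of y x] uy by simp
    then have "cmod (f (of_real y) - f (of_real x)) \<le> 0" using d by (simp add: mult_le_0_iff)
    then have "f (of_real y) = f (of_real x)" by simp
    then show ?thesis by (simp add: g_def y_def)
  qed
  have lip: "lipschitz_on (1 / \<delta>) UNIV g"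
    unfolding lipschitz_on_def
  proof (intro conjI ballI)
    show "0 \<le> 1 / \<delta>" using d by simp
    fix s t :: real
    obtain x where x: "u x = s" using surj by blast
    obtain y where y: "u y = t" using surj by blast
    have "\<bar>Im (f (of_real x) - f (of_real y))\<bar> \<le> cmod (f (of_real x) - f (of_real y))"
      by (rule abs_Im_le_cmod)
    also have "\<dots> \<le> \<bar>u x - u y\<bar> / \<delta>" using key[of x y] d by (simp add: field_simps)
    finally have "\<bar>g s - g t\<bar> \<le> \<bar>s - t\<bar> / \<delta>" using gx[of x] gx[of y] x y by simp
    then show "dist (g s) (g t) \<le> 1 / \<delta> * dist s t" by (simp add: dist_real_def)
  qed
  have fx: "f (of_real x) = of_real (u x) + \<i> * of_real (g (u x))" for x
  proof -
    have e: "g (u x) = Im (f (of_real x))" by (rule gx)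
    have "f (of_real x) = of_real (u x) + \<i> * of_real (Im (f (of_real x)))"
      unfolding u_def by (rule complex_eq)
    then show ?thesis using e by simp
  qed
  have "f ` (complex_of_real ` UNIV) = {complex_of_real x + \<i> * complex_of_real (g x) | x. True}"
  proof (intro equalityI subsetI)
    fix w assume "w \<in> f ` (complex_of_real ` UNIV)"
    then obtain x where "w = f (of_real x)" by blast
    then show "w \<in> {complex_of_real x + \<i> * complex_of_real (g x) | x. True}" using fx by blast
  next
    fix w assume "w \<in> {complex_of_real x + \<i> * complex_of_real (g x) | x. True}"
    then obtain s where s: "w = of_real s + \<i> * of_real (g s)" by blast
    obtain x where "u x = s" using surj by blast
    then have "w = f (of_real x)" using fx s by simp
    then show "w \<in> f ` (complex_of_real ` UNIV)" by blast
  qed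
  then show ?thesis using lip by blast
qed

lemma Re_mult_cnj: "Re (x * cnj y) = Re x * Re y + Im x * Im y"
  by simp

lemma lin_help:
  fixes A C P B K2 KC :: real
  assumes "2 * P \<le> A + K2" "K2 \<le> KC" "0 \<le> B + P"
  shows "(A + KC) / 2 \<le> A + (B + KC)"
proof -
  have "(A + KC) / 2 = A / 2 + KC / 2" by (rule add_divide_distrib)
  then show ?thesis using assms by linarith
qed

lemma core_ineq:
  fixes a b c L K X Y :: real
  assumes L: "L \<ge> 0" and K: "K = L^2 + 1" and b: "\<bar>b\<bar> \<le> L * \<bar>a\<bar>"
    and X: "X \<le> (1 + L + K) * (\<bar>a\<bar> + \<bar>c\<bar>)" and Y: "Y \<le> \<bar>a\<bar> + \<bar>c\<bar>" and X0: "X \<ge> 0" and Y0: "Y \<ge> 0"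
  shows "1 / (4 * (1 + L + K)) * X * Y \<le> a * a + (b + K * c) * c"
proof -
  have Kp: "1 + L + K > 0" using L K by (simp add: add_pos_nonneg)
  have "X * Y \<le> ((1 + L + K) * (\<bar>a\<bar> + \<bar>c\<bar>)) * (\<bar>a\<bar> + \<bar>c\<bar>)"
    using X Y X0 Y0 by (intro mult_mono) auto
  also have "\<dots> = (1 + L + K) * (\<bar>a\<bar> + \<bar>c\<bar>)^2" by (simp add: power2_eq_square)
  also have "\<dots> \<le> (1 + L + K) * (2 * (a * a + K * (c * c)))"
  proof (rule mult_left_mono)
    have "(\<bar>a\<bar> + \<bar>c\<bar>)^2 \<le> 2 * (a * a + c * c)"
      using sum_squares_ge_zero[of "\<bar>a\<bar> - \<bar>c\<bar>" 0]
      by (simp add: power2_eq_square algebra_simps abs_mult_self_eq)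
    moreover have "c * c \<le> K * (c * c)"
    proof -
      have "0 \<le> L^2 * (c * c)" by simp
      then show ?thesis using K by (simp add: distrib_right)
    qed
    ultimately show "(\<bar>a\<bar> + \<bar>c\<bar>)^2 \<le> 2 * (a * a + K * (c * c))" by simp
  qed (use Kp in simp)
  finally have XY: "X * Y \<le> (1 + L + K) * (2 * (a * a + K * (c * c)))" .
  have bc: "0 \<le> b * c + L * \<bar>a\<bar> * \<bar>c\<bar>"
  proof -
    have "\<bar>b * c\<bar> \<le> L * \<bar>a\<bar> * \<bar>c\<bar>" using b by (simp add: abs_mult mult_right_mono)
    then show ?thesis by linarith
  qed
  have "2 * (L * \<bar>a\<bar> * \<bar>c\<bar>) \<le> a * a + L^2 * (c * c)"
  proof -
    have "0 \<le> (\<bar>a\<bar> - L * \<bar>c\<bar>)^2" by simp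
    then show ?thesis by (simp add: power2_eq_square algebra_simps abs_mult_self_eq)
  qed
  moreover have "L^2 * (c * c) \<le> K * (c * c)" using K by (simp add: distrib_right)
  moreover have "(b + K * c) * c = b * c + K * (c * c)" by (simp add: algebra_simps)
  ultimately have "a * a + (b + K * c) * c \<ge> (a * a + K * (c * c)) / 2"
    using bc lin_help[of "L * \<bar>a\<bar> * \<bar>c\<bar>" "a * a" "L^2 * (c * c)" "K * (c * c)" "b * c"] by simp
  moreover have "1 / (4 * (1 + L + K)) * X * Y \<le> (a * a + K * (c * c)) / 2"
    using XY Kp by (simp add: field_simps)
  ultimately show ?thesis by linarith
qed

lemma bwd:
  fixes g :: "real \<Rightarrow> real"
  assumes lip: "lipschitz_on L UNIV g"
  shows "\<exists>f. delta_monotone f \<and> \<not> (\<exists>c. \<forall>z. f z = c) \<and>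
     f ` (complex_of_real ` UNIV) = {complex_of_real x + \<i> * complex_of_real (g x) | x. True}"
proof -
  have L: "L \<ge> 0" and gl: "\<And>x y. \<bar>g x - g y\<bar> \<le> L * \<bar>x - y\<bar>"
    using lip unfolding lipschitz_on_def dist_real_def by auto
  define K where "K = L^2 + 1"
  define \<delta> where "\<delta> = 1 / (4 * (1 + L + K))"
  define f where "f z = complex_of_real (Re z) + \<i> * complex_of_real (g (Re z) + K * Im z)" for z
  have Kp: "1 + L + K > 0" using L by (simp add: K_def add_pos_nonneg)
  have dpos: "\<delta> > 0" using Kp by (simp add: \<delta>_def)
  have cone: "kone \<delta> (f z - f w) (z - w)" for z w
  proof -
    define a where "a = Re z - Re w"
    define c where "c = Im z - Im w"
    define b where "b = g (Re z) - g (Re w)"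
    have df: "f z - f w = complex_of_real a + \<i> * complex_of_real (b + K * c)"
      by (simp add: f_def a_def b_def c_def algebra_simps)
    have Re_df: "Re (f z - f w) = a" and Im_df: "Im (f z - f w) = b + K * c" by (simp_all add: df)
    have Re_dz: "Re (z - w) = a" and Im_dz: "Im (z - w) = c" by (simp_all add: a_def c_def)
    have bb: "\<bar>b\<bar> \<le> L * \<bar>a\<bar>" using gl by (simp add: a_def b_def)
    have X: "cmod (f z - f w) \<le> (1 + L + K) * (\<bar>a\<bar> + \<bar>c\<bar>)"
    proof -
      have "cmod (f z - f w) \<le> \<bar>a\<bar> + \<bar>b + K * c\<bar>" using cmod_le[of "f z - f w"] Re_df Im_df by simp
      also have "\<dots> \<le> \<bar>a\<bar> + L * \<bar>a\<bar> + K * \<bar>c\<bar>"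
        using bb abs_triangle_ineq[of b "K * c"] by (simp add: abs_mult K_def)
      also have "\<dots> \<le> (1 + L + K) * (\<bar>a\<bar> + \<bar>c\<bar>)"
        using L by (simp add: algebra_simps K_def add_nonneg_nonneg mult_nonneg_nonneg)
      finally show ?thesis .
    qed
    have Y: "cmod (z - w) \<le> \<bar>a\<bar> + \<bar>c\<bar>" using cmod_le[of "z - w"] Re_dz Im_dz by simp
    have R: "Re ((f z - f w) * cnj (z - w)) = a * a + (b + K * c) * c"
      using Re_mult_cnj[of "f z - f w" "z - w"] unfolding Re_df Im_df Re_dz Im_dz .
    show ?thesis unfolding kone_def R \<delta>_def
      by (rule core_ineq[OF L K_def bb X Y]) simp_all
  qed
  have dm: "delta_monotone f"
    unfolding delta_monotone_def
  proof (intro exI[of _ \<delta>] conjI allI impI)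
    show "\<delta> > 0" by (rule dpos)
    fix z w :: complex assume ne: "z \<noteq> w"
    then have pos: "cmod (z - w) > 0" by simp
    have "\<delta> * cmod (f z - f w) * cmod (z - w) \<le> Re ((f z - f w) * cnj (z - w))"
      using cone[of z w] by (simp add: kone_def)
    then have "\<delta> * cmod (f z - f w) * cmod (z - w) / (cmod (z - w))^2 \<le> Re ((f z - f w) * cnj (z - w)) / (cmod (z - w))^2"
      by (simp add: divide_right_mono)
    moreover have "\<delta> * cmod (f z - f w) * cmod (z - w) / (cmod (z - w))^2 = \<delta> * (cmod (f z - f w) / cmod (z - w))"
      using pos by (simp add: power2_eq_square field_simps)
    ultimately show "\<delta> * (cmod (f z - f w) / cmod (z - w)) \<le> Re ((f z - f w) / (z - w))"
      using Re_div_eq[of "z - w" "f z - f w"] ne by simp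
  qed
  have nc: "\<not> (\<exists>c. \<forall>z. f z = c)"
  proof
    assume "\<exists>c. \<forall>z. f z = c"
    then have "f \<i> = f 0" by metis
    then have "Im (f \<i>) = Im (f 0)" by simp
    then show False using K_def by (simp add: f_def) (smt (verit) zero_le_power2)
  qed
  have img: "f ` (complex_of_real ` UNIV) = {complex_of_real x + \<i> * complex_of_real (g x) | x. True}"
    by (auto simp: f_def image_iff)
  show ?thesis using dm nc img by blast
qed

theorem proposition1p5:
  fixes \<Gamma> :: "complex set"
  shows "(\<exists>f. delta_monotone f \<and> \<not> (\<exists>c. \<forall>z. f z = c) \<and> \<Gamma> = f ` (complex_of_real ` UNIV))
     \<longleftrightarrow> (\<exists>g :: real \<Rightarrow> real. (\<exists>L. lipschitz_on L UNIV g) \<and>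
            \<Gamma> = {complex_of_real x + \<i> * complex_of_real (g x) | x. True})"
proof
  assume "\<exists>f. delta_monotone f \<and> \<not> (\<exists>c. \<forall>z. f z = c) \<and> \<Gamma> = f ` (complex_of_real ` UNIV)"
  then obtain f where "delta_monotone f" "\<not> (\<exists>c. \<forall>z. f z = c)" "\<Gamma> = f ` (complex_of_real ` UNIV)" by blast
  then show "\<exists>g :: real \<Rightarrow> real. (\<exists>L. lipschitz_on L UNIV g) \<and>
            \<Gamma> = {complex_of_real x + \<i> * complex_of_real (g x) | x. True}"
    using fwd by metis
next
  assume "\<exists>g :: real \<Rightarrow> real. (\<exists>L. lipschitz_on L UNIV g) \<and>
            \<Gamma> = {complex_of_real x + \<i> * complex_of_real (g x) | x. True}"
  then obtain g L where "lipschitz_on L UNIV g" "\<Gamma> = {complex_of_real x + \<i> * complex_of_real (g x) | x. True}"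
    by blast
  then show "\<exists>f. delta_monotone f \<and> \<not> (\<exists>c. \<forall>z. f z = c) \<and> \<Gamma> = f ` (complex_of_real ` UNIV)"
    using bwd by metis
qed


end
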